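(* For every $1\le i\le k$ and every set $S\subseteq V_i$, the reduction procedure on $\mathbf{T}_i$ with input $S$ is well-defined: in Step 1 and in Step 2 no vertex of the current syndrome set is paired with more than one other vertex, and in Step 3 no vertex is shifted more than once. Moreover its output $\hat{\mathbf{e}}_i$ satisfies $S\,\triangle\,\sigma(\hat{\mathbf{e}}_i)\subseteq V_{i-1}$.
   Context: Fix $k\ge1$. Let $\mathbf{T}_k=(V_k,E_k)$ be the Cayley graph of $\mathbb{Z}/2^k\mathbb{Z}\times\mathbb{Z}/2^k\mathbb{Z}$ with generators $(\pm1,0),(0,\pm1)$. For $\hat{\mathbf{e}}\in\mathbb{F}_2^{E_k}$, $\sigma(\hat{\mathbf{e}})$ is the set of vertices incident to an odd number of edges of $\hat{\mathbf{e}}$. For $0\le i\le k$ let $h_i=2^{k-i}$, let $V_i$ be the subgroup generated by $(h_i,0),(0,h_i)$, and let $\mathbf{T}_i$ be the graph on $V_i$ joining vertices differing by $\pm h_i$ in exactly one coordinate; each edge of $\mathbf{T}_i$ is identified with the straight path of length $h_i$ in $\mathbf{T}_k$, and flipping an edge of $\mathbf{T}_i$ means adding (mod 2) all edges of that path to $\hat{\mathbf{e}}_i$. For $i\ge1$, a cell of $\mathbf{T}_i$ is a face: with $h=h_i$, vertices $\alpha=(x,y)$, $\beta=(x+h,y)$, $\gamma=(x,y-h)$, $\delta=(x+h,y-h)$ and edges $t=\alpha\beta$, $b=\gamma\delta$, $l=\alpha\gamma$, $r=\beta\delta$. A block of $\mathbf{T}_i$ is a square of side $2h$ with top-left corner in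 $V_{i-1}$ (a face of $\mathbf{T}_{i-1}$), made of four cells $A$ (top-left), $B$ (top-right), $C$ (bottom-left), $D$ (bottom-right). Reduction procedure on $\mathbf{T}_i$ (input $S\subseteq V_i$, output $\hat{\mathbf{e}}_i$ initially $0$; in each step the tests use $S$ as at the start of that step, all blocks simultaneously). Step 1: in the $D$ cell of every block, if $\alpha,\delta\in S$ flip $l,b$ (pairing $\alpha$ with $\delta$); if $\beta,\gamma\in S$ flip $b,r$ (pairing $\beta$ with $\gamma$); if all four are in $S$ only $l$ and $r$ are flipped; then remove paired vertices from $S$. Step 2: in the $C$ cell of every block, if $\alpha,\gamma\in S$ flip $l$, if $\beta,\delta\in S$ flip $r$; in the $B$ cell of every block, if $\alpha,\beta\in S$ flip $t$, if $\gamma,\delta\in S$ flip $b$ (each such instruction pairs the two vertices); then remove paired vertices from $S$. Step 3: in the $A$ cell of every block, if $\beta\in S$ flip $t$, if $\gamma\in S$ flip $l$, if $\delta\in S$ flip $l$ and $b$ (each shifting that vertex to $\alpha$). *)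

theory Defs
  imports Main
begin

(* Vertices of the torus T_k = Cayley graph of Z/2^k x Z/2^k are represented by
   normalised integer pairs (a,b) with 0 <= a,b < 2^k.  Edges are 2-element
   vertex sets; an edge set e-hat in F_2^{E_k} is a set of edges. *)

type_synonym vert = "int \<times> int"
type_synonym edge = "vert set"

definition Nk :: "nat \<Rightarrow> int" where
  "Nk k = 2 ^ k"

definition vn :: "nat \<Rightarrow> vert \<Rightarrow> vert" where
  "vn k p = (fst p mod Nk k, snd p mod Nk k)"

definition vplus :: "vert \<Rightarrow> int \<Rightarrow> int \<Rightarrow> vert" where
  "vplus p x y = (fst p + x, snd p + y)"

definition torus_vertices :: "nat \<Rightarrow> vert set" where
  "torus_vertices k = {p. 0 \<le> fst p \<and> fst p < Nk k \<and> 0 \<le> snd p \<and> snd p < Nk k}"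

definition torus_edges :: "nat \<Rightarrow> edge set" where
  "torus_edges k =
     {{u, vn k (vplus u 1 0)} | u. u \<in> torus_vertices k} \<union>
     {{u, vn k (vplus u 0 1)} | u. u \<in> torus_vertices k}"

definition sigma :: "nat \<Rightarrow> edge set \<Rightarrow> vert set" where
  "sigma k e = {v \<in> torus_vertices k. odd (card {x \<in> e. v \<in> x})}"

definition hgt :: "nat \<Rightarrow> nat \<Rightarrow> int" where
  "hgt k i = 2 ^ (k - i)"

definition sublattice :: "nat \<Rightarrow> nat \<Rightarrow> vert set" where
  "sublattice k i = {p \<in> torus_vertices k. hgt k i dvd fst p \<and> hgt k i dvd snd p}"

definition hpath :: "nat \<Rightarrow> vert \<Rightarrow> int \<Rightarrow> edge set" where
  "hpath k p h = {{vn k (vplus p j 0), vn k (vplus p (j + 1) 0)} | j. 0 \<le> j \<and> j < h}"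

definition vpath :: "nat \<Rightarrow> vert \<Rightarrow> int \<Rightarrow> edge set" where
  "vpath k p h = {{vn k (vplus p 0 j), vn k (vplus p 0 (j + 1))} | j. 0 \<le> j \<and> j < h}"

datatype corner = Alpha | Beta | Gamma | Delta
datatype side = Top | Bot | Lft | Rgt
datatype cellpos = CellA | CellB | CellC | CellD

(* cell with top-left vertex a (alpha) and side h:
   alpha=(x,y), beta=(x+h,y), gamma=(x,y-h), delta=(x+h,y-h) *)
fun cell_vertex :: "nat \<Rightarrow> int \<Rightarrow> vert \<Rightarrow> corner \<Rightarrow> vert" where
  "cell_vertex k h a Alpha = vn k a"
| "cell_vertex k h a Beta = vn k (vplus a h 0)"
| "cell_vertex k h a Gamma = vn k (vplus a 0 (- h))"
| "cell_vertex k h a Delta = vn k (vplus a h (- h))"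

fun cell_side :: "nat \<Rightarrow> int \<Rightarrow> vert \<Rightarrow> side \<Rightarrow> edge set" where
  "cell_side k h a Top = hpath k a h"
| "cell_side k h a Bot = hpath k (vplus a 0 (- h)) h"
| "cell_side k h a Lft = vpath k (vplus a 0 (- h)) h"
| "cell_side k h a Rgt = vpath k (vplus a h (- h)) h"

(* alpha vertex of the cells A (top-left), B (top-right), C (bottom-left),
   D (bottom-right) of the block with top-left corner c (side 2h) *)
fun cell_alpha :: "int \<Rightarrow> vert \<Rightarrow> cellpos \<Rightarrow> vert" where
  "cell_alpha h c CellA = c"
| "cell_alpha h c CellB = vplus c h 0"
| "cell_alpha h c CellC = vplus c 0 (- h)"
| "cell_alpha h c CellD = vplus c h (- h)"

datatype instr =
    D_AD | D_BG | D_AG | D_BD    (* step 1; D_AG, D_BD together = the all-four case *)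
  | C_AG | C_BD | B_AB | B_GD
  | A_B | A_G | A_D              (* step 3: shift beta / gamma / delta to alpha *)

fun instr_step :: "instr \<Rightarrow> nat" where
  "instr_step D_AD = 1" | "instr_step D_BG = 1" | "instr_step D_AG = 1" | "instr_step D_BD = 1"
| "instr_step C_AG = 2" | "instr_step C_BD = 2" | "instr_step B_AB = 2" | "instr_step B_GD = 2"
| "instr_step A_B = 3" | "instr_step A_G = 3" | "instr_step A_D = 3"

fun instr_cell :: "instr \<Rightarrow> cellpos" where
  "instr_cell D_AD = CellD" | "instr_cell D_BG = CellD" | "instr_cell D_AG = CellD"
| "instr_cell D_BD = CellD"
| "instr_cell C_AG = CellC" | "instr_cell C_BD = CellC"
| "instr_cell B_AB = CellB" | "instr_cell B_GD = CellB"
| "instr_cell A_B = CellA" | "instr_cell A_G = CellA" | "instr_cell A_D = CellA"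

fun instr_corners :: "instr \<Rightarrow> corner set" where
  "instr_corners D_AD = {Alpha, Delta}"
| "instr_corners D_BG = {Beta, Gamma}"
| "instr_corners D_AG = {Alpha, Gamma}"
| "instr_corners D_BD = {Beta, Delta}"
| "instr_corners C_AG = {Alpha, Gamma}"
| "instr_corners C_BD = {Beta, Delta}"
| "instr_corners B_AB = {Alpha, Beta}"
| "instr_corners B_GD = {Gamma, Delta}"
| "instr_corners A_B = {Beta}"
| "instr_corners A_G = {Gamma}"
| "instr_corners A_D = {Delta}"

fun instr_sides :: "instr \<Rightarrow> side list" where
  "instr_sides D_AD = [Lft, Bot]"
| "instr_sides D_BG = [Bot, Rgt]"
| "instr_sides D_AG = [Lft]"
| "instr_sides D_BD = [Rgt]"
| "instr_sides C_AG = [Lft]"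
| "instr_sides C_BD = [Rgt]"
| "instr_sides B_AB = [Top]"
| "instr_sides B_GD = [Bot]"
| "instr_sides A_B = [Top]"
| "instr_sides A_G = [Lft]"
| "instr_sides A_D = [Lft, Bot]"

definition blocks :: "nat \<Rightarrow> nat \<Rightarrow> vert set" where
  "blocks k i = sublattice k (i - 1)"

definition instr_verts :: "nat \<Rightarrow> nat \<Rightarrow> vert \<Rightarrow> instr \<Rightarrow> vert set" where
  "instr_verts k i c l =
     cell_vertex k (hgt k i) (cell_alpha (hgt k i) c (instr_cell l)) ` instr_corners l"

definition instr_flips :: "nat \<Rightarrow> nat \<Rightarrow> vert \<Rightarrow> instr \<Rightarrow> edge set list" where
  "instr_flips k i c l =
     map (cell_side k (hgt k i) (cell_alpha (hgt k i) c (instr_cell l))) (instr_sides l)"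

definition Dcell_verts :: "nat \<Rightarrow> nat \<Rightarrow> vert \<Rightarrow> vert set" where
  "Dcell_verts k i c = cell_vertex k (hgt k i) (cell_alpha (hgt k i) c CellD) ` UNIV"

(* Step 1 (tests use S at the start of Step 1) *)
definition active1 :: "nat \<Rightarrow> nat \<Rightarrow> vert set \<Rightarrow> vert \<Rightarrow> instr \<Rightarrow> bool" where
  "active1 k i S c l =
     (instr_step l = 1 \<and>
      (if l = D_AG \<or> l = D_BD then Dcell_verts k i c \<subseteq> S
       else instr_verts k i c l \<subseteq> S \<and> \<not> Dcell_verts k i c \<subseteq> S))"

definition after1 :: "nat \<Rightarrow> nat \<Rightarrow> vert set \<Rightarrow> vert set" where
  "after1 k i S = S - \<Union> {instr_verts k i c l | c l. c \<in> blocks k i \<and> active1 k i S c l}"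

(* Step 2 (tests use the set at the start of Step 2) *)
definition active2 :: "nat \<Rightarrow> nat \<Rightarrow> vert set \<Rightarrow> vert \<Rightarrow> instr \<Rightarrow> bool" where
  "active2 k i S c l = (instr_step l = 2 \<and> instr_verts k i c l \<subseteq> after1 k i S)"

definition after2 :: "nat \<Rightarrow> nat \<Rightarrow> vert set \<Rightarrow> vert set" where
  "after2 k i S = after1 k i S -
     \<Union> {instr_verts k i c l | c l. c \<in> blocks k i \<and> active2 k i S c l}"

definition active3 :: "nat \<Rightarrow> nat \<Rightarrow> vert set \<Rightarrow> vert \<Rightarrow> instr \<Rightarrow> bool" where
  "active3 k i S c l = (instr_step l = 3 \<and> instr_verts k i c l \<subseteq> after2 k i S)"

definition active :: "nat \<Rightarrow> nat \<Rightarrow> vert set \<Rightarrow> vert \<Rightarrow> instr \<Rightarrow> bool" where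
  "active k i S c l = (active1 k i S c l \<or> active2 k i S c l \<or> active3 k i S c l)"

definition reduction_output :: "nat \<Rightarrow> nat \<Rightarrow> vert set \<Rightarrow> edge set" where
  "reduction_output k i S =
     {e. odd (card {(c, l, j). c \<in> blocks k i \<and> active k i S c l \<and>
                               j < length (instr_flips k i c l) \<and> e \<in> instr_flips k i c l ! j})}"

end

theory Submission
  imports Defs
begin


lemma parity_sum_sets:
  fixes F :: "'t \<Rightarrow> 'e set set"
  assumes T: "finite T" and F: "\<And>t. t \<in> T \<Longrightarrow> finite (F t)"
  shows "odd (card {x \<in> {e. odd (card {t \<in> T. e \<in> F t})}. v \<in> x})
         \<longleftrightarrow> odd (\<Sum>t\<in>T. card {x \<in> F t. v \<in> x})"
proof -
  define U where "U = {x \<in> \<Union>(F ` T). v \<in> x}"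
  have U: "finite U" using T F unfolding U_def by auto
  have 1: "{x \<in> {e. odd (card {t \<in> T. e \<in> F t})}. v \<in> x} = {x \<in> U. odd (card {t \<in> T. x \<in> F t})}"
  proof (rule set_eqI, rule iffI)
    fix x assume "x \<in> {x \<in> {e. odd (card {t \<in> T. e \<in> F t})}. v \<in> x}"
    then have "odd (card {t \<in> T. x \<in> F t})" "v \<in> x" by auto
    then have "{t \<in> T. x \<in> F t} \<noteq> {}" by (metis card.empty even_zero)
    then show "x \<in> {x \<in> U. odd (card {t \<in> T. x \<in> F t})}" using \<open>odd _\<close> \<open>v \<in> x\<close> unfolding U_def by auto
  qed (auto simp: U_def)
  have 2: "card {x \<in> F t. v \<in> x} = (\<Sum>x\<in>U. if x \<in> F t then 1 else 0)" if "t \<in> T" for t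
  proof -
    have "(\<Sum>x\<in>U. if x \<in> F t then 1 else 0) = (\<Sum>x\<in>{x\<in>U. x \<in> F t}. 1::nat)"
      using U by (simp add: sum.inter_filter[symmetric])
    also have "{x\<in>U. x \<in> F t} = {x \<in> F t. v \<in> x}" using that unfolding U_def by auto
    finally show ?thesis by simp
  qed
  have 3: "card {t \<in> T. x \<in> F t} = (\<Sum>t\<in>T. if x \<in> F t then 1 else 0)" for x
  proof -
    have "(\<Sum>t\<in>T. if x \<in> F t then 1 else 0) = (\<Sum>t\<in>{t\<in>T. x \<in> F t}. 1::nat)"
      using T by (simp add: sum.inter_filter[symmetric])
    then show ?thesis by simp
  qed
  have "(\<Sum>t\<in>T. card {x \<in> F t. v \<in> x}) = (\<Sum>t\<in>T. \<Sum>x\<in>U. if x \<in> F t then 1 else 0)"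
    using 2 by simp
  also have "\<dots> = (\<Sum>x\<in>U. \<Sum>t\<in>T. if x \<in> F t then 1 else 0)" by (rule sum.swap)
  also have "\<dots> = (\<Sum>x\<in>U. card {t \<in> T. x \<in> F t})" using 3 by simp
  finally have "odd (\<Sum>t\<in>T. card {x \<in> F t. v \<in> x}) \<longleftrightarrow> odd (card {x\<in>U. odd (card {t \<in> T. x \<in> F t})})"
    using even_sum_iff[OF U] by simp
  then show ?thesis using 1 by simp
qed

lemma path_parity:
  fixes g :: "int \<Rightarrow> 'a" and N :: int
  assumes g: "\<And>j j'. g j = g j' \<longleftrightarrow> (j - j') mod N = 0"
  and n: "0 \<le> n" "2 * n \<le> N"
  shows "finite {{g j, g (j+1)} | j. 0 \<le> j \<and> j < n} \<and>
    (odd (card {x \<in> {{g j, g (j+1)} | j. 0 \<le> j \<and> j < n}. v \<in> x}) \<longleftrightarrow> ((v = g 0) \<noteq> (v = g n)))"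
  using n
proof (induction n rule: int_ge_induct)
  case base
  have e: "{{g j, g (j+1)} | j. 0 \<le> j \<and> j < (0::int)} = {}" by auto
  show ?case unfolding e by simp
next
  case (step m)
  let ?H = "{{g j, g (j+1)} | j. 0 \<le> j \<and> j < m}"
  let ?e = "{g m, g (m+1)}"
  have N: "N \<ge> 2 * (m+1)" using step by simp
  have eq: "{{g j, g (j+1)} | j. 0 \<le> j \<and> j < m + 1} = insert ?e ?H"
    
  proof
    show "{{g j, g (j+1)} | j. 0 \<le> j \<and> j < m + 1} \<subseteq> insert ?e ?H"
    proof
      fix x assume "x \<in> {{g j, g (j+1)} | j. 0 \<le> j \<and> j < m + 1}"
      then obtain j where "x = {g j, g (j+1)}" "0 \<le> j" "j < m + 1" by blast
      then show "x \<in> insert ?e ?H" by (cases "j = m") auto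
    qed
  qed (use step(1) in force)
  have ih: "finite ?H" "odd (card {x \<in> ?H. v \<in> x}) \<longleftrightarrow> ((v = g 0) \<noteq> (v = g m))"
    using step N by auto
  have ne: "?e \<notin> ?H"
  proof
    assume "?e \<in> ?H"
    then obtain j where j: "0 \<le> j" "j < m" "?e = {g j, g (j+1)}" by auto
    have "m \<ge> 1" using j by simp
    then have N4: "N \<ge> 4" using N by simp
    have "g m = g j \<or> g m = g (j+1)" using j(3) by auto
    moreover have "g m \<noteq> g j"
    proof
      assume "g m = g j" then have "(m - j) mod N = 0" using g by blast
      moreover have "0 < m - j" "m - j < N" using j N by auto
      ultimately show False by simp
    qed
    ultimately have "g m = g (j+1)" "g (m+1) = g j" using j(3) by (auto simp: doubleton_eq_iff)
    then have "(m - (j+1)) mod N = 0" "(m + 1 - j) mod N = 0" using g by blast+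
    moreover have "0 \<le> m - (j+1)" "m - (j+1) < N" "0 < m + 1 - j" "m + 1 - j < N" using j N by auto
    ultimately have "m - (j+1) = 0" "m + 1 - j = 0" by simp_all
    then show False by simp
  qed
  have d: "g m \<noteq> g (m+1)"
  proof
    assume "g m = g (m+1)" then have "(m - (m+1)) mod N = 0" using g by blast
    then have "(-1) mod N = 0" by simp
    then show False using N step(1) by (simp add: zmod_minus1)
  qed
  have "{x \<in> insert ?e ?H. v \<in> x} = (if v \<in> ?e then insert ?e {x \<in> ?H. v \<in> x} else {x \<in> ?H. v \<in> x})"
    by auto
  then have "card {x \<in> insert ?e ?H. v \<in> x} = card {x \<in> ?H. v \<in> x} + (if v \<in> ?e then 1 else 0)"
    using ih(1) ne by simp
  then have "odd (card {x \<in> insert ?e ?H. v \<in> x}) \<longleftrightarrow> ((v = g 0) \<noteq> (v = g (m+1)))"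
    using ih(2) d by (cases "v = g m"; cases "v = g (m+1)") auto
  then show ?case unfolding eq using ih(1) by simp
qed



fun offs :: "instr \<Rightarrow> (int \<times> int) set" where
  "offs D_AD = {(1,1),(2,2)}" | "offs D_BG = {(2,1),(1,2)}"
| "offs D_AG = {(1,1),(1,2)}" | "offs D_BD = {(2,1),(2,2)}"
| "offs C_AG = {(0,1),(0,2)}" | "offs C_BD = {(1,1),(1,2)}"
| "offs B_AB = {(1,0),(2,0)}" | "offs B_GD = {(1,1),(2,1)}"
| "offs A_B = {(1,0)}" | "offs A_G = {(0,1)}" | "offs A_D = {(1,1)}"

fun cpos :: "corner \<Rightarrow> int \<times> int" where
  "cpos Alpha = (0,0)" | "cpos Beta = (1,0)" | "cpos Gamma = (0,1)" | "cpos Delta = (1,1)"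

lemma instr_UNIV: "(UNIV :: instr set) = {D_AD, D_BG, D_AG, D_BD, C_AG, C_BD, B_AB, B_GD, A_B, A_G, A_D}"
  apply (rule UNIV_eq_I) subgoal for x by (cases x) auto done

lemma finite_instr[simp]: "finite (A :: instr set)"
proof -
  have "finite (UNIV::instr set)" by (simp only: instr_UNIV) simp
  then show ?thesis by (rule finite_subset[OF subset_UNIV])
qed

locale red =
  fixes k i :: nat
  assumes i1: "1 \<le> i" and ik: "i \<le> k"
begin

abbreviation "h \<equiv> hgt k i"
abbreviation "N \<equiv> Nk k"

lemma N_eq: "N = h * 2 * 2 ^ (i - 1)"
proof -
  have "k = (k - i) + 1 + (i - 1)" using i1 ik by simp
  then have "(2::int) ^ k = 2 ^ (k - i) * 2 * 2 ^ (i - 1)" by (metis power_add power_one_right)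
  then show ?thesis by (simp add: Nk_def hgt_def)
qed

lemma h_pos: "h > 0" by (simp add: hgt_def)
lemma hN: "2 * h \<le> N"
proof -
  have "(1::int) \<le> 2 ^ (i - 1)" by simp
  then have "2 * h * 1 \<le> 2 * h * 2 ^ (i - 1)" using h_pos by (intro mult_left_mono) auto
  then show ?thesis using N_eq by (simp add: algebra_simps)
qed
lemma h2_dvd_N: "2 * h dvd N" using N_eq by (simp add: mult.commute)
lemma hgt_prev: "hgt k (i - 1) = 2 * h"
proof -
  have "k - (i - 1) = Suc (k - i)" using i1 ik by simp
  then show ?thesis by (simp add: hgt_def)
qed

lemma blocks_iff: "c \<in> blocks k i \<longleftrightarrow> 0 \<le> fst c \<and> fst c < N \<and> 0 \<le> snd c \<and> snd c < N \<and>
   2 * h dvd fst c \<and> 2 * h dvd snd c"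
  using hgt_prev by (auto simp: blocks_def sublattice_def torus_vertices_def)

definition Q :: "vert \<Rightarrow> int \<Rightarrow> int \<Rightarrow> vert" where
  "Q c a b = vn k (fst c + a * h, snd c - b * h)"

lemma Q_eq: "Q c a b = Q c' a' b' \<longleftrightarrow> N dvd (fst c + a * h - (fst c' + a' * h)) \<and> N dvd (snd c - b * h - (snd c' - b' * h))"
  by (simp add: Q_def vn_def mod_eq_dvd_iff)

lemma vn_block: "c \<in> blocks k i \<Longrightarrow> vn k c = c"
  by (cases c) (simp add: blocks_iff vn_def)

lemma Q00: "c \<in> blocks k i \<Longrightarrow> Q c 0 0 = c"
  using vn_block by (simp add: Q_def)

lemma Q_Q[simp]: "Q (Q c m n) a b = Q c (m + a) (n + b)"
  by (simp add: Q_def vn_def mod_simps algebra_simps)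

lemma Q_block: assumes "c \<in> blocks k i" "even m" "even n" shows "Q c m n \<in> blocks k i"
proof -
  obtain m' n' where m: "m = 2 * m'" and n: "n = 2 * n'" using assms by (meson evenE)
  have N0: "N > 0" by (simp add: Nk_def)
  have "2 * h dvd (fst c + m * h)" "2 * h dvd (snd c - n * h)" using assms(1) m n
    by (auto simp: blocks_iff)
  then have "2 * h dvd (fst c + m * h) mod N" "2 * h dvd (snd c - n * h) mod N"
    using h2_dvd_N by (auto simp: dvd_mod)
  then show ?thesis using N0 by (simp add: blocks_iff Q_def vn_def)
qed

lemma Pinj:
  assumes c: "c \<in> blocks k i" and c': "c' \<in> blocks k i" and eq: "Q c a b = Q c' a' b'"
  shows "even (a - a') \<and> even (b - b') \<and> c' = Q c (a - a') (b - b')"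
proof -
  have d1: "N dvd (fst c + a * h - (fst c' + a' * h))" and d2: "N dvd (snd c - b * h - (snd c' - b' * h))"
    using eq Q_eq by auto
  have e1: "2 * h dvd (fst c + a * h - (fst c' + a' * h))" using d1 h2_dvd_N dvd_trans by blast
  have "2 * h dvd fst c - fst c'" using c c' by (auto simp: blocks_iff)
  then have "2 * h dvd (fst c + a * h - (fst c' + a' * h)) - (fst c - fst c')" using e1 by (rule dvd_diff[rotated])
  then have "2 * h dvd (a - a') * h" by (simp add: algebra_simps)
  then have ea: "even (a - a')" using h_pos by (simp add: mult.commute)
  have e2: "2 * h dvd (snd c - b * h - (snd c' - b' * h))" using d2 h2_dvd_N dvd_trans by blast
  have "2 * h dvd snd c - snd c'" using c c' by (auto simp: blocks_iff)
  then have "2 * h dvd (snd c - b * h - (snd c' - b' * h)) - (snd c - snd c')" using e2 by (rule dvd_diff[rotated])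
  then have "2 * h dvd (b' - b) * h" by (simp add: algebra_simps)
  then have "even (b' - b)" using h_pos by (simp add: mult.commute)
  then have eb: "even (b - b')" by (metis even_minus minus_diff_eq)
  have "Q c (a - a') (b - b') = Q c' 0 0" using d1 d2 by (simp add: Q_eq algebra_simps)
  then show ?thesis using ea eb Q00[OF c'] by simp
qed

end


fun cpo :: "cellpos \<Rightarrow> int \<times> int" where
  "cpo CellA = (0,0)" | "cpo CellB = (1,0)" | "cpo CellC = (0,1)" | "cpo CellD = (1,1)"

context red begin

lemma cell_vertex_Q: "cell_vertex k h a x = Q a (fst (cpos x)) (snd (cpos x))"
  by (cases x) (simp_all add: Q_def vplus_def)

lemma cell_alpha_Q: "Q (cell_alpha h c p) a b = Q c (fst (cpo p) + a) (snd (cpo p) + b)"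
  by (cases p) (simp_all add: Q_def vplus_def algebra_simps)

lemma instr_verts_Q: "instr_verts k i c l = (\<lambda>(a,b). Q c a b) ` offs l"
  by (cases l) (simp_all add: instr_verts_def Q_def vplus_def algebra_simps)

lemma not_dvd_h: "\<not> N dvd h" "\<not> N dvd - h"
proof -
  have "0 < h" "h < N" using h_pos hN by auto
  then show "\<not> N dvd h" "\<not> N dvd - h" using zdvd_not_zless by auto
qed

lemma cv_inj: "cell_vertex k h a x = cell_vertex k h a y \<Longrightarrow> x = y"
  using not_dvd_h by (cases x; cases y) (simp_all add: cell_vertex_Q Q_eq algebra_simps del: cell_vertex.simps)

end


context red begin

abbreviation "cvD d \<equiv> cell_vertex k h (cell_alpha h d CellD)"

lemma after1_sub: "after1 k i S \<subseteq> S" by (auto simp: after1_def)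
lemma after2_sub: "after2 k i S \<subseteq> after1 k i S" by (auto simp: after2_def)

lemma rem1: "c \<in> blocks k i \<Longrightarrow> active1 k i S c l \<Longrightarrow> v \<in> instr_verts k i c l \<Longrightarrow> v \<notin> after1 k i S"
  unfolding after1_def by blast

lemma rem2: "c \<in> blocks k i \<Longrightarrow> active2 k i S c l \<Longrightarrow> v \<in> instr_verts k i c l \<Longrightarrow> v \<notin> after2 k i S"
  unfolding after2_def by blast

lemma iv_D: "instr_cell l = CellD \<Longrightarrow> instr_verts k i d l = cvD d ` instr_corners l"
  by (simp add: instr_verts_def)

lemma D3:
  assumes d: "d \<in> blocks k i" and dist: "x \<noteq> y" "x \<noteq> z" "y \<noteq> z"
  and mem: "cvD d x \<in> after1 k i S" "cvD d y \<in> after1 k i S" "cvD d z \<in> after1 k i S"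
  shows False
proof -
  have S: "cvD d x \<in> S" "cvD d y \<in> S" "cvD d z \<in> S" using mem after1_sub by auto
  have key: "\<exists>l. instr_step l = 1 \<and> active1 k i S d l \<and> (x \<in> instr_corners l \<or> y \<in> instr_corners l)"
  proof (cases "Dcell_verts k i d \<subseteq> S")
    case True
    then have "active1 k i S d D_AG" "active1 k i S d D_BD" by (auto simp: active1_def)
    moreover have "x \<in> instr_corners D_AG \<or> x \<in> instr_corners D_BD" by (cases x) auto
    ultimately show ?thesis by (metis instr_step.simps)
  next
    case False
    then obtain w where w: "cvD d w \<notin> S" unfolding Dcell_verts_def by blast
    have wn: "w \<noteq> x" "w \<noteq> y" "w \<noteq> z" using w S by auto
    have allS: "u \<noteq> w \<Longrightarrow> cvD d u \<in> S" for u
    proof -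
      assume "u \<noteq> w"
      then have "u = x \<or> u = y \<or> u = z" using dist wn by (cases u; cases w; cases x; cases y; cases z) auto
      then show ?thesis using S by auto
    qed
    show ?thesis
    proof (cases "w = Beta \<or> w = Gamma")
      case True
      then have "Alpha \<noteq> w" "Delta \<noteq> w" by auto
      then have "cvD d Alpha \<in> S" "cvD d Delta \<in> S" using allS by blast+
      then have "active1 k i S d D_AD" using False by (simp add: active1_def iv_D)
      moreover have "x \<in> instr_corners D_AD \<or> y \<in> instr_corners D_AD"
        using True dist wn by (cases x; cases y; cases z) auto
      ultimately show ?thesis by (metis instr_step.simps)
    next
      case F2: False
      then have "Beta \<noteq> w" "Gamma \<noteq> w" by auto
      then have "cvD d Beta \<in> S" "cvD d Gamma \<in> S" using allS by blast+
      then have "active1 k i S d D_BG" using False by (simp add: active1_def iv_D)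
      moreover have "x \<in> instr_corners D_BG \<or> y \<in> instr_corners D_BG"
        using F2 dist wn by (cases x; cases y; cases z; cases w) auto
      ultimately show ?thesis by (metis instr_step.simps)
    qed
  qed
  then obtain l where l: "instr_step l = 1" "active1 k i S d l" "x \<in> instr_corners l \<or> y \<in> instr_corners l" by blast
  have "instr_cell l = CellD" using l(1) by (cases l) auto
  then have "cvD d x \<in> instr_verts k i d l \<or> cvD d y \<in> instr_verts k i d l" using l(3) by (auto simp: iv_D)
  then show False using rem1[OF d l(2)] mem by blast
qed

lemma cvD_Q: "cvD d x = Q d (1 + fst (cpos x)) (1 + snd (cpos x))"
  by (simp only: cell_vertex_Q cell_alpha_Q) simp

lemma D3Q:
  assumes d: "d \<in> blocks k i" and dist: "x \<noteq> y" "x \<noteq> z" "y \<noteq> z"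
  and mem: "Q d (1 + fst (cpos x)) (1 + snd (cpos x)) \<in> after1 k i S"
     "Q d (1 + fst (cpos y)) (1 + snd (cpos y)) \<in> after1 k i S"
     "Q d (1 + fst (cpos z)) (1 + snd (cpos z)) \<in> after1 k i S"
  shows False
proof -
  have "cvD d x \<in> after1 k i S" "cvD d y \<in> after1 k i S" "cvD d z \<in> after1 k i S"
    unfolding cvD_Q by (rule mem)+
  then show False using D3[OF d dist] by blast
qed

end


context red begin

lemma bad_gen:
  assumes c: "c \<in> blocks k i" and e: "even m" "even n" and dist: "x \<noteq> y" "x \<noteq> z" "y \<noteq> z"
  and "Q c (m + 1 + fst (cpos x)) (n + 1 + snd (cpos x)) \<in> after1 k i S"
      "Q c (m + 1 + fst (cpos y)) (n + 1 + snd (cpos y)) \<in> after1 k i S"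
      "Q c (m + 1 + fst (cpos z)) (n + 1 + snd (cpos z)) \<in> after1 k i S"
  shows False
  using D3Q[OF Q_block[OF c e] dist, of S] assms(7-9) by (simp add: add.assoc)

lemma bad1: "c \<in> blocks k i \<Longrightarrow> Q c 0 1 \<in> after1 k i S \<Longrightarrow> Q c 0 2 \<in> after1 k i S \<Longrightarrow> Q c (-1) 1 \<in> after1 k i S \<Longrightarrow> False"
  using bad_gen[of c "-2" 0 Beta Delta Alpha S] by simp
lemma bad1': "c \<in> blocks k i \<Longrightarrow> Q c 1 1 \<in> after1 k i S \<Longrightarrow> Q c 2 1 \<in> after1 k i S \<Longrightarrow> Q c 2 2 \<in> after1 k i S \<Longrightarrow> False"
  using bad_gen[of c 0 0 Alpha Beta Delta S] by simp
lemma bad2: "c \<in> blocks k i \<Longrightarrow> Q c 0 1 \<in> after1 k i S \<Longrightarrow> Q c 0 2 \<in> after1 k i S \<Longrightarrow> Q c (-1) 2 \<in> after1 k i S \<Longrightarrow> False"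
  using bad_gen[of c "-2" 0 Beta Delta Gamma S] by simp
lemma bad2': "c \<in> blocks k i \<Longrightarrow> Q c 2 (-1) \<in> after1 k i S \<Longrightarrow> Q c 2 0 \<in> after1 k i S \<Longrightarrow> Q c 1 0 \<in> after1 k i S \<Longrightarrow> False"
  using bad_gen[of c 0 "-2" Beta Delta Gamma S] by simp
lemma bad3: "c \<in> blocks k i \<Longrightarrow> Q c 1 1 \<in> after1 k i S \<Longrightarrow> Q c 1 2 \<in> after1 k i S \<Longrightarrow> Q c 2 2 \<in> after1 k i S \<Longrightarrow> False"
  using bad_gen[of c 0 0 Alpha Gamma Delta S] by simp
lemma bad3': "c \<in> blocks k i \<Longrightarrow> Q c 1 (-1) \<in> after1 k i S \<Longrightarrow> Q c 1 0 \<in> after1 k i S \<Longrightarrow> Q c 2 0 \<in> after1 k i S \<Longrightarrow> False"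
  using bad_gen[of c 0 "-2" Alpha Gamma Delta S] by simp
lemma bad4: "c \<in> blocks k i \<Longrightarrow> Q c 1 1 \<in> after1 k i S \<Longrightarrow> Q c 1 2 \<in> after1 k i S \<Longrightarrow> Q c 2 1 \<in> after1 k i S \<Longrightarrow> False"
  using bad_gen[of c 0 0 Alpha Gamma Beta S] by simp

end


context red begin

lemma in_iv: "v \<in> instr_verts k i c l \<Longrightarrow> \<exists>a b. (a,b) \<in> offs l \<and> v = Q c a b"
  by (auto simp: instr_verts_Q)

lemma uniq2:
  assumes c: "c \<in> blocks k i" and c': "c' \<in> blocks k i"
  and act: "active2 k i S c l" "active2 k i S c' l'"
  and ab: "(a,b) \<in> offs l" and ab': "(a',b') \<in> offs l'" and eq: "Q c a b = Q c' a' b'"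
  shows "c = c' \<and> l = l'"
proof -
  from Pinj[OF c c' eq] have E: "even (a - a')" "even (b - b')" and c'eq: "c' = Q c (a - a') (b - b')" by auto
  have M: "Q c x y \<in> after1 k i S" if "(x,y) \<in> offs l" for x y
    using act(1) that by (force simp: active2_def instr_verts_Q)
  have M': "Q c (a - a' + x) (b - b' + y) \<in> after1 k i S" if "(x,y) \<in> offs l'" for x y
    using act(2) that c'eq by (force simp: active2_def instr_verts_Q)
  have s: "instr_step l = 2" "instr_step l' = 2" using act by (auto simp: active2_def)
  have cl: "l = C_AG \<or> l = C_BD \<or> l = B_AB \<or> l = B_GD" using s(1) by (cases l) auto
  have cl': "l' = C_AG \<or> l' = C_BD \<or> l' = B_AB \<or> l' = B_GD" using s(2) by (cases l') auto
  from cl show ?thesis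
  proof (elim disjE)
    assume hl: "l = C_AG"
    from cl' show ?thesis
    proof (elim disjE)
      assume hl': "l' = C_AG"
      from ab hl have "(a = 0 \<and> b = 1) \<or> (a = 0 \<and> b = 2)" by simp
      then show ?thesis
      proof (elim disjE conjE)
        assume ha: "a = 0" "b = 1"
        from ab' hl' have "(a' = 0 \<and> b' = 1) \<or> (a' = 0 \<and> b' = 2)" by simp
        then show ?thesis
        proof (elim disjE conjE)
          assume hb: "a' = 0" "b' = 1"
          show ?thesis using hl hl' ha hb c'eq Q00[OF c] by simp
        next
          assume hb: "a' = 0" "b' = 2"
          show ?thesis using hl hl' ha hb E by simp
        qed
      next
        assume ha: "a = 0" "b = 2"
        from ab' hl' have "(a' = 0 \<and> b' = 1) \<or> (a' = 0 \<and> b' = 2)" by simp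
        then show ?thesis
        proof (elim disjE conjE)
          assume hb: "a' = 0" "b' = 1"
          show ?thesis using hl hl' ha hb E by simp
        next
          assume hb: "a' = 0" "b' = 2"
          show ?thesis using hl hl' ha hb c'eq Q00[OF c] by simp
        qed
      qed
    next
      assume hl': "l' = C_BD"
      from ab hl have "(a = 0 \<and> b = 1) \<or> (a = 0 \<and> b = 2)" by simp
      then show ?thesis
      proof (elim disjE conjE)
        assume ha: "a = 0" "b = 1"
        from ab' hl' have "(a' = 1 \<and> b' = 1) \<or> (a' = 1 \<and> b' = 2)" by simp
        then show ?thesis
        proof (elim disjE conjE)
          assume hb: "a' = 1" "b' = 1"
          show ?thesis using hl hl' ha hb E by simp
        next
          assume hb: "a' = 1" "b' = 2"
          show ?thesis using hl hl' ha hb E by simp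
        qed
      next
        assume ha: "a = 0" "b = 2"
        from ab' hl' have "(a' = 1 \<and> b' = 1) \<or> (a' = 1 \<and> b' = 2)" by simp
        then show ?thesis
        proof (elim disjE conjE)
          assume hb: "a' = 1" "b' = 1"
          show ?thesis using hl hl' ha hb E by simp
        next
          assume hb: "a' = 1" "b' = 2"
          show ?thesis using hl hl' ha hb E by simp
        qed
      qed
    next
      assume hl': "l' = B_AB"
      from ab hl have "(a = 0 \<and> b = 1) \<or> (a = 0 \<and> b = 2)" by simp
      then show ?thesis
      proof (elim disjE conjE)
        assume ha: "a = 0" "b = 1"
        from ab' hl' have "(a' = 1 \<and> b' = 0) \<or> (a' = 2 \<and> b' = 0)" by simp
        then show ?thesis
        proof (elim disjE conjE)
          assume hb: "a' = 1" "b' = 0"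
          show ?thesis using hl hl' ha hb E by simp
        next
          assume hb: "a' = 2" "b' = 0"
          show ?thesis using hl hl' ha hb E by simp
        qed
      next
        assume ha: "a = 0" "b = 2"
        from ab' hl' have "(a' = 1 \<and> b' = 0) \<or> (a' = 2 \<and> b' = 0)" by simp
        then show ?thesis
        proof (elim disjE conjE)
          assume hb: "a' = 1" "b' = 0"
          show ?thesis using hl hl' ha hb E by simp
        next
          assume hb: "a' = 2" "b' = 0"
          have "Q c 0 1 \<in> after1 k i S" "Q c 0 2 \<in> after1 k i S" "Q c (-1) 2 \<in> after1 k i S" using hl hl' ha hb M[of 0 1] M[of 0 2] M'[of 1 0] by simp_all
          then show ?thesis using bad2[OF c] by blast
        qed
      qed
    next
      assume hl': "l' = B_GD"
      from ab hl have "(a = 0 \<and> b = 1) \<or> (a = 0 \<and> b = 2)" by simp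
      then show ?thesis
      proof (elim disjE conjE)
        assume ha: "a = 0" "b = 1"
        from ab' hl' have "(a' = 1 \<and> b' = 1) \<or> (a' = 2 \<and> b' = 1)" by simp
        then show ?thesis
        proof (elim disjE conjE)
          assume hb: "a' = 1" "b' = 1"
          show ?thesis using hl hl' ha hb E by simp
        next
          assume hb: "a' = 2" "b' = 1"
          have "Q c 0 1 \<in> after1 k i S" "Q c 0 2 \<in> after1 k i S" "Q c (-1) 1 \<in> after1 k i S" using hl hl' ha hb M[of 0 1] M[of 0 2] M'[of 1 1] by simp_all
          then show ?thesis using bad1[OF c] by blast
        qed
      next
        assume ha: "a = 0" "b = 2"
        from ab' hl' have "(a' = 1 \<and> b' = 1) \<or> (a' = 2 \<and> b' = 1)" by simp
        then show ?thesis
        proof (elim disjE conjE)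
          assume hb: "a' = 1" "b' = 1"
          show ?thesis using hl hl' ha hb E by simp
        next
          assume hb: "a' = 2" "b' = 1"
          show ?thesis using hl hl' ha hb E by simp
        qed
      qed
    qed
  next
    assume hl: "l = C_BD"
    from cl' show ?thesis
    proof (elim disjE)
      assume hl': "l' = C_AG"
      from ab hl have "(a = 1 \<and> b = 1) \<or> (a = 1 \<and> b = 2)" by simp
      then show ?thesis
      proof (elim disjE conjE)
        assume ha: "a = 1" "b = 1"
        from ab' hl' have "(a' = 0 \<and> b' = 1) \<or> (a' = 0 \<and> b' = 2)" by simp
        then show ?thesis
        proof (elim disjE conjE)
          assume hb: "a' = 0" "b' = 1"
          show ?thesis using hl hl' ha hb E by simp
        next
          assume hb: "a' = 0" "b' = 2"
          show ?thesis using hl hl' ha hb E by simp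
        qed
      next
        assume ha: "a = 1" "b = 2"
        from ab' hl' have "(a' = 0 \<and> b' = 1) \<or> (a' = 0 \<and> b' = 2)" by simp
        then show ?thesis
        proof (elim disjE conjE)
          assume hb: "a' = 0" "b' = 1"
          show ?thesis using hl hl' ha hb E by simp
        next
          assume hb: "a' = 0" "b' = 2"
          show ?thesis using hl hl' ha hb E by simp
        qed
      qed
    next
      assume hl': "l' = C_BD"
      from ab hl have "(a = 1 \<and> b = 1) \<or> (a = 1 \<and> b = 2)" by simp
      then show ?thesis
      proof (elim disjE conjE)
        assume ha: "a = 1" "b = 1"
        from ab' hl' have "(a' = 1 \<and> b' = 1) \<or> (a' = 1 \<and> b' = 2)" by simp
        then show ?thesis
        proof (elim disjE conjE)
          assume hb: "a' = 1" "b' = 1"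
          show ?thesis using hl hl' ha hb c'eq Q00[OF c] by simp
        next
          assume hb: "a' = 1" "b' = 2"
          show ?thesis using hl hl' ha hb E by simp
        qed
      next
        assume ha: "a = 1" "b = 2"
        from ab' hl' have "(a' = 1 \<and> b' = 1) \<or> (a' = 1 \<and> b' = 2)" by simp
        then show ?thesis
        proof (elim disjE conjE)
          assume hb: "a' = 1" "b' = 1"
          show ?thesis using hl hl' ha hb E by simp
        next
          assume hb: "a' = 1" "b' = 2"
          show ?thesis using hl hl' ha hb c'eq Q00[OF c] by simp
        qed
      qed
    next
      assume hl': "l' = B_AB"
      from ab hl have "(a = 1 \<and> b = 1) \<or> (a = 1 \<and> b = 2)" by simp
      then show ?thesis
      proof (elim disjE conjE)
        assume ha: "a = 1" "b = 1"
        from ab' hl' have "(a' = 1 \<and> b' = 0) \<or> (a' = 2 \<and> b' = 0)" by simp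
        then show ?thesis
        proof (elim disjE conjE)
          assume hb: "a' = 1" "b' = 0"
          show ?thesis using hl hl' ha hb E by simp
        next
          assume hb: "a' = 2" "b' = 0"
          show ?thesis using hl hl' ha hb E by simp
        qed
      next
        assume ha: "a = 1" "b = 2"
        from ab' hl' have "(a' = 1 \<and> b' = 0) \<or> (a' = 2 \<and> b' = 0)" by simp
        then show ?thesis
        proof (elim disjE conjE)
          assume hb: "a' = 1" "b' = 0"
          have "Q c 1 1 \<in> after1 k i S" "Q c 1 2 \<in> after1 k i S" "Q c 2 2 \<in> after1 k i S" using hl hl' ha hb M[of 1 1] M[of 1 2] M'[of 2 0] by simp_all
          then show ?thesis using bad3[OF c] by blast
        next
          assume hb: "a' = 2" "b' = 0"
          show ?thesis using hl hl' ha hb E by simp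
        qed
      qed
    next
      assume hl': "l' = B_GD"
      from ab hl have "(a = 1 \<and> b = 1) \<or> (a = 1 \<and> b = 2)" by simp
      then show ?thesis
      proof (elim disjE conjE)
        assume ha: "a = 1" "b = 1"
        from ab' hl' have "(a' = 1 \<and> b' = 1) \<or> (a' = 2 \<and> b' = 1)" by simp
        then show ?thesis
        proof (elim disjE conjE)
          assume hb: "a' = 1" "b' = 1"
          have "Q c 1 1 \<in> after1 k i S" "Q c 1 2 \<in> after1 k i S" "Q c 2 1 \<in> after1 k i S" using hl hl' ha hb M[of 1 1] M[of 1 2] M'[of 2 1] by simp_all
          then show ?thesis using bad4[OF c] by blast
        next
          assume hb: "a' = 2" "b' = 1"
          show ?thesis using hl hl' ha hb E by simp
        qed
      next
        assume ha: "a = 1" "b = 2"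
        from ab' hl' have "(a' = 1 \<and> b' = 1) \<or> (a' = 2 \<and> b' = 1)" by simp
        then show ?thesis
        proof (elim disjE conjE)
          assume hb: "a' = 1" "b' = 1"
          show ?thesis using hl hl' ha hb E by simp
        next
          assume hb: "a' = 2" "b' = 1"
          show ?thesis using hl hl' ha hb E by simp
        qed
      qed
    qed
  next
    assume hl: "l = B_AB"
    from cl' show ?thesis
    proof (elim disjE)
      assume hl': "l' = C_AG"
      from ab hl have "(a = 1 \<and> b = 0) \<or> (a = 2 \<and> b = 0)" by simp
      then show ?thesis
      proof (elim disjE conjE)
        assume ha: "a = 1" "b = 0"
        from ab' hl' have "(a' = 0 \<and> b' = 1) \<or> (a' = 0 \<and> b' = 2)" by simp
        then show ?thesis
        proof (elim disjE conjE)
          assume hb: "a' = 0" "b' = 1"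
          show ?thesis using hl hl' ha hb E by simp
        next
          assume hb: "a' = 0" "b' = 2"
          show ?thesis using hl hl' ha hb E by simp
        qed
      next
        assume ha: "a = 2" "b = 0"
        from ab' hl' have "(a' = 0 \<and> b' = 1) \<or> (a' = 0 \<and> b' = 2)" by simp
        then show ?thesis
        proof (elim disjE conjE)
          assume hb: "a' = 0" "b' = 1"
          show ?thesis using hl hl' ha hb E by simp
        next
          assume hb: "a' = 0" "b' = 2"
          have "Q c 2 (-1) \<in> after1 k i S" "Q c 2 0 \<in> after1 k i S" "Q c 1 0 \<in> after1 k i S" using hl hl' ha hb M'[of 0 1] M[of 2 0] M[of 1 0] by simp_all
          then show ?thesis using bad2'[OF c] by blast
        qed
      qed
    next
      assume hl': "l' = C_BD"
      from ab hl have "(a = 1 \<and> b = 0) \<or> (a = 2 \<and> b = 0)" by simp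
      then show ?thesis
      proof (elim disjE conjE)
        assume ha: "a = 1" "b = 0"
        from ab' hl' have "(a' = 1 \<and> b' = 1) \<or> (a' = 1 \<and> b' = 2)" by simp
        then show ?thesis
        proof (elim disjE conjE)
          assume hb: "a' = 1" "b' = 1"
          show ?thesis using hl hl' ha hb E by simp
        next
          assume hb: "a' = 1" "b' = 2"
          have "Q c 1 (-1) \<in> after1 k i S" "Q c 1 0 \<in> after1 k i S" "Q c 2 0 \<in> after1 k i S" using hl hl' ha hb M'[of 1 1] M[of 1 0] M[of 2 0] by simp_all
          then show ?thesis using bad3'[OF c] by blast
        qed
      next
        assume ha: "a = 2" "b = 0"
        from ab' hl' have "(a' = 1 \<and> b' = 1) \<or> (a' = 1 \<and> b' = 2)" by simp
        then show ?thesis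
        proof (elim disjE conjE)
          assume hb: "a' = 1" "b' = 1"
          show ?thesis using hl hl' ha hb E by simp
        next
          assume hb: "a' = 1" "b' = 2"
          show ?thesis using hl hl' ha hb E by simp
        qed
      qed
    next
      assume hl': "l' = B_AB"
      from ab hl have "(a = 1 \<and> b = 0) \<or> (a = 2 \<and> b = 0)" by simp
      then show ?thesis
      proof (elim disjE conjE)
        assume ha: "a = 1" "b = 0"
        from ab' hl' have "(a' = 1 \<and> b' = 0) \<or> (a' = 2 \<and> b' = 0)" by simp
        then show ?thesis
        proof (elim disjE conjE)
          assume hb: "a' = 1" "b' = 0"
          show ?thesis using hl hl' ha hb c'eq Q00[OF c] by simp
        next
          assume hb: "a' = 2" "b' = 0"
          show ?thesis using hl hl' ha hb E by simp
        qed
      next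
        assume ha: "a = 2" "b = 0"
        from ab' hl' have "(a' = 1 \<and> b' = 0) \<or> (a' = 2 \<and> b' = 0)" by simp
        then show ?thesis
        proof (elim disjE conjE)
          assume hb: "a' = 1" "b' = 0"
          show ?thesis using hl hl' ha hb E by simp
        next
          assume hb: "a' = 2" "b' = 0"
          show ?thesis using hl hl' ha hb c'eq Q00[OF c] by simp
        qed
      qed
    next
      assume hl': "l' = B_GD"
      from ab hl have "(a = 1 \<and> b = 0) \<or> (a = 2 \<and> b = 0)" by simp
      then show ?thesis
      proof (elim disjE conjE)
        assume ha: "a = 1" "b = 0"
        from ab' hl' have "(a' = 1 \<and> b' = 1) \<or> (a' = 2 \<and> b' = 1)" by simp
        then show ?thesis
        proof (elim disjE conjE)
          assume hb: "a' = 1" "b' = 1"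
          show ?thesis using hl hl' ha hb E by simp
        next
          assume hb: "a' = 2" "b' = 1"
          show ?thesis using hl hl' ha hb E by simp
        qed
      next
        assume ha: "a = 2" "b = 0"
        from ab' hl' have "(a' = 1 \<and> b' = 1) \<or> (a' = 2 \<and> b' = 1)" by simp
        then show ?thesis
        proof (elim disjE conjE)
          assume hb: "a' = 1" "b' = 1"
          show ?thesis using hl hl' ha hb E by simp
        next
          assume hb: "a' = 2" "b' = 1"
          show ?thesis using hl hl' ha hb E by simp
        qed
      qed
    qed
  next
    assume hl: "l = B_GD"
    from cl' show ?thesis
    proof (elim disjE)
      assume hl': "l' = C_AG"
      from ab hl have "(a = 1 \<and> b = 1) \<or> (a = 2 \<and> b = 1)" by simp
      then show ?thesis
      proof (elim disjE conjE)
        assume ha: "a = 1" "b = 1"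
        from ab' hl' have "(a' = 0 \<and> b' = 1) \<or> (a' = 0 \<and> b' = 2)" by simp
        then show ?thesis
        proof (elim disjE conjE)
          assume hb: "a' = 0" "b' = 1"
          show ?thesis using hl hl' ha hb E by simp
        next
          assume hb: "a' = 0" "b' = 2"
          show ?thesis using hl hl' ha hb E by simp
        qed
      next
        assume ha: "a = 2" "b = 1"
        from ab' hl' have "(a' = 0 \<and> b' = 1) \<or> (a' = 0 \<and> b' = 2)" by simp
        then show ?thesis
        proof (elim disjE conjE)
          assume hb: "a' = 0" "b' = 1"
          have "Q c 1 1 \<in> after1 k i S" "Q c 2 1 \<in> after1 k i S" "Q c 2 2 \<in> after1 k i S" using hl hl' ha hb M[of 1 1] M[of 2 1] M'[of 0 2] by simp_all
          then show ?thesis using bad1'[OF c] by blast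
        next
          assume hb: "a' = 0" "b' = 2"
          show ?thesis using hl hl' ha hb E by simp
        qed
      qed
    next
      assume hl': "l' = C_BD"
      from ab hl have "(a = 1 \<and> b = 1) \<or> (a = 2 \<and> b = 1)" by simp
      then show ?thesis
      proof (elim disjE conjE)
        assume ha: "a = 1" "b = 1"
        from ab' hl' have "(a' = 1 \<and> b' = 1) \<or> (a' = 1 \<and> b' = 2)" by simp
        then show ?thesis
        proof (elim disjE conjE)
          assume hb: "a' = 1" "b' = 1"
          have "Q c 1 1 \<in> after1 k i S" "Q c 1 2 \<in> after1 k i S" "Q c 2 1 \<in> after1 k i S" using hl hl' ha hb M[of 1 1] M'[of 1 2] M[of 2 1] by simp_all
          then show ?thesis using bad4[OF c] by blast
        next
          assume hb: "a' = 1" "b' = 2"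
          show ?thesis using hl hl' ha hb E by simp
        qed
      next
        assume ha: "a = 2" "b = 1"
        from ab' hl' have "(a' = 1 \<and> b' = 1) \<or> (a' = 1 \<and> b' = 2)" by simp
        then show ?thesis
        proof (elim disjE conjE)
          assume hb: "a' = 1" "b' = 1"
          show ?thesis using hl hl' ha hb E by simp
        next
          assume hb: "a' = 1" "b' = 2"
          show ?thesis using hl hl' ha hb E by simp
        qed
      qed
    next
      assume hl': "l' = B_AB"
      from ab hl have "(a = 1 \<and> b = 1) \<or> (a = 2 \<and> b = 1)" by simp
      then show ?thesis
      proof (elim disjE conjE)
        assume ha: "a = 1" "b = 1"
        from ab' hl' have "(a' = 1 \<and> b' = 0) \<or> (a' = 2 \<and> b' = 0)" by simp
        then show ?thesis
        proof (elim disjE conjE)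
          assume hb: "a' = 1" "b' = 0"
          show ?thesis using hl hl' ha hb E by simp
        next
          assume hb: "a' = 2" "b' = 0"
          show ?thesis using hl hl' ha hb E by simp
        qed
      next
        assume ha: "a = 2" "b = 1"
        from ab' hl' have "(a' = 1 \<and> b' = 0) \<or> (a' = 2 \<and> b' = 0)" by simp
        then show ?thesis
        proof (elim disjE conjE)
          assume hb: "a' = 1" "b' = 0"
          show ?thesis using hl hl' ha hb E by simp
        next
          assume hb: "a' = 2" "b' = 0"
          show ?thesis using hl hl' ha hb E by simp
        qed
      qed
    next
      assume hl': "l' = B_GD"
      from ab hl have "(a = 1 \<and> b = 1) \<or> (a = 2 \<and> b = 1)" by simp
      then show ?thesis
      proof (elim disjE conjE)
        assume ha: "a = 1" "b = 1"
        from ab' hl' have "(a' = 1 \<and> b' = 1) \<or> (a' = 2 \<and> b' = 1)" by simp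
        then show ?thesis
        proof (elim disjE conjE)
          assume hb: "a' = 1" "b' = 1"
          show ?thesis using hl hl' ha hb c'eq Q00[OF c] by simp
        next
          assume hb: "a' = 2" "b' = 1"
          show ?thesis using hl hl' ha hb E by simp
        qed
      next
        assume ha: "a = 2" "b = 1"
        from ab' hl' have "(a' = 1 \<and> b' = 1) \<or> (a' = 2 \<and> b' = 1)" by simp
        then show ?thesis
        proof (elim disjE conjE)
          assume hb: "a' = 1" "b' = 1"
          show ?thesis using hl hl' ha hb E by simp
        next
          assume hb: "a' = 2" "b' = 1"
          show ?thesis using hl hl' ha hb c'eq Q00[OF c] by simp
        qed
      qed
    qed
  qed
qed

lemma uniq1:
  assumes c: "c \<in> blocks k i" and c': "c' \<in> blocks k i"
  and act: "active1 k i S c l" "active1 k i S c' l'"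
  and ab: "(a,b) \<in> offs l" and ab': "(a',b') \<in> offs l'" and eq: "Q c a b = Q c' a' b'"
  shows "c = c' \<and> l = l'"
proof -
  from Pinj[OF c c' eq] have E: "even (a - a')" "even (b - b')" and c'eq: "c' = Q c (a - a') (b - b')" by auto
  have s: "instr_step l = 1" "instr_step l' = 1" using act by (auto simp: active1_def)
  have cl: "l = D_AD \<or> l = D_BG \<or> l = D_AG \<or> l = D_BD" using s(1) by (cases l) auto
  have cl': "l' = D_AD \<or> l' = D_BG \<or> l' = D_AG \<or> l' = D_BD" using s(2) by (cases l') auto
  have p: "a \<in> {1,2}" "b \<in> {1,2}" using cl ab by auto
  have p': "a' \<in> {1,2}" "b' \<in> {1,2}" using cl' ab' by auto
  have aa: "a = a'" "b = b'" using p p' E by auto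
  then have cc: "c' = c" using c'eq Q00[OF c] by simp
  have A: "((l = D_AD \<or> l = D_BG) \<and> \<not> Dcell_verts k i c \<subseteq> S) \<or> ((l = D_AG \<or> l = D_BD) \<and> Dcell_verts k i c \<subseteq> S)"
    using act(1) cl by (auto simp: active1_def)
  have A': "((l' = D_AD \<or> l' = D_BG) \<and> \<not> Dcell_verts k i c \<subseteq> S) \<or> ((l' = D_AG \<or> l' = D_BD) \<and> Dcell_verts k i c \<subseteq> S)"
    using act(2) cl' cc by (auto simp: active1_def)
  have "l = l'" using A A' ab ab' aa cl cl' by (elim disjE; simp; elim disjE; auto)
  then show ?thesis using cc by simp
qed

lemma uniq3:
  assumes c: "c \<in> blocks k i" and c': "c' \<in> blocks k i"
  and act: "active3 k i S c l" "active3 k i S c' l'"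
  and ab: "(a,b) \<in> offs l" and ab': "(a',b') \<in> offs l'" and eq: "Q c a b = Q c' a' b'"
  shows "c = c' \<and> l = l'"
proof -
  from Pinj[OF c c' eq] have E: "even (a - a')" "even (b - b')" and c'eq: "c' = Q c (a - a') (b - b')" by auto
  have s: "instr_step l = 3" "instr_step l' = 3" using act by (auto simp: active3_def)
  have cl: "l = A_B \<or> l = A_G \<or> l = A_D" using s(1) by (cases l) auto
  have cl': "l' = A_B \<or> l' = A_G \<or> l' = A_D" using s(2) by (cases l') auto
  have p: "a \<in> {0,1}" "b \<in> {0,1}" using cl ab by auto
  have p': "a' \<in> {0,1}" "b' \<in> {0,1}" using cl' ab' by auto
  have aa: "a = a'" "b = b'" using p p' E by auto
  then have cc: "c' = c" using c'eq Q00[OF c] by simp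
  have "l = l'" using ab ab' aa cl cl' by (elim disjE; simp; elim disjE; auto)
  then show ?thesis using cc by simp
qed

lemma uniq:
  assumes c: "c \<in> blocks k i" and c': "c' \<in> blocks k i"
  and act: "active k i S c l" "active k i S c' l'" and st: "instr_step l = instr_step l'"
  and v: "v \<in> instr_verts k i c l" "v \<in> instr_verts k i c' l'"
  shows "c = c' \<and> l = l'"
proof -
  obtain a b where ab: "(a,b) \<in> offs l" "v = Q c a b" using in_iv[OF v(1)] by blast
  obtain a' b' where ab': "(a',b') \<in> offs l'" "v = Q c' a' b'" using in_iv[OF v(2)] by blast
  have eq: "Q c a b = Q c' a' b'" using ab ab' by simp
  have "instr_step l = 1 \<or> instr_step l = 2 \<or> instr_step l = 3" by (cases l) auto
  moreover have "instr_step l = 1 \<Longrightarrow> active1 k i S c l \<and> active1 k i S c' l'"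
    using act st by (auto simp: active_def active1_def active2_def active3_def)
  moreover have "instr_step l = 2 \<Longrightarrow> active2 k i S c l \<and> active2 k i S c' l'"
    using act st by (auto simp: active_def active1_def active2_def active3_def)
  moreover have "instr_step l = 3 \<Longrightarrow> active3 k i S c l \<and> active3 k i S c' l'"
    using act st by (auto simp: active_def active1_def active2_def active3_def)
  ultimately show ?thesis
    using uniq1[OF c c' _ _ ab(1) ab'(1) eq] uniq2[OF c c' _ _ ab(1) ab'(1) eq] uniq3[OF c c' _ _ ab(1) ab'(1) eq]
    by blast
qed

end


context red begin

lemma gpath_h:
  fixes p :: vert
  defines "g \<equiv> \<lambda>j. vn k (vplus p j 0)"
  shows "g j = g j' \<longleftrightarrow> (j - j') mod N = 0"
  by (simp add: g_def vn_def vplus_def mod_eq_dvd_iff dvd_eq_mod_eq_0)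

lemma gpath_v:
  fixes p :: vert
  defines "g \<equiv> \<lambda>j. vn k (vplus p 0 j)"
  shows "g j = g j' \<longleftrightarrow> (j - j') mod N = 0"
  by (simp add: g_def vn_def vplus_def mod_eq_dvd_iff dvd_eq_mod_eq_0)

lemma N_mod_h: "h mod N \<noteq> 0"
  using not_dvd_h by (simp add: dvd_eq_mod_eq_0)

lemma hpath_par: "finite (hpath k p h) \<and>
   (odd (card {x \<in> hpath k p h. v \<in> x}) \<longleftrightarrow> v = vn k p \<or> v = vn k (vplus p h 0))"
proof -
  have "finite {{vn k (vplus p j 0), vn k (vplus p (j+1) 0)} | j. 0 \<le> j \<and> j < h} \<and>
    (odd (card {x \<in> {{vn k (vplus p j 0), vn k (vplus p (j+1) 0)} | j. 0 \<le> j \<and> j < h}. v \<in> x}) \<longleftrightarrow>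
      ((v = vn k (vplus p 0 0)) \<noteq> (v = vn k (vplus p h 0))))"
    using path_parity[of "\<lambda>j. vn k (vplus p j 0)" N h v] gpath_h[of p] h_pos hN by simp
  moreover have "vn k (vplus p 0 0) \<noteq> vn k (vplus p h 0)" using gpath_h[of p 0 h] not_dvd_h
    by (simp add: dvd_eq_mod_eq_0[symmetric])
  moreover have "vplus p 0 0 = p" by (simp add: vplus_def)
  ultimately show ?thesis unfolding hpath_def by auto
qed

lemma vpath_par: "finite (vpath k p h) \<and>
   (odd (card {x \<in> vpath k p h. v \<in> x}) \<longleftrightarrow> v = vn k p \<or> v = vn k (vplus p 0 h))"
proof -
  have "finite {{vn k (vplus p 0 j), vn k (vplus p 0 (j+1))} | j. 0 \<le> j \<and> j < h} \<and>
    (odd (card {x \<in> {{vn k (vplus p 0 j), vn k (vplus p 0 (j+1))} | j. 0 \<le> j \<and> j < h}. v \<in> x}) \<longleftrightarrow>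
      ((v = vn k (vplus p 0 0)) \<noteq> (v = vn k (vplus p 0 h))))"
    using path_parity[of "\<lambda>j. vn k (vplus p 0 j)" N h v] gpath_v[of p] h_pos hN by simp
  moreover have "vn k (vplus p 0 0) \<noteq> vn k (vplus p 0 h)" using gpath_v[of p 0 h] not_dvd_h
    by (simp add: dvd_eq_mod_eq_0[symmetric])
  moreover have "vplus p 0 0 = p" by (simp add: vplus_def)
  ultimately show ?thesis unfolding vpath_def by auto
qed

fun e1 :: "side \<Rightarrow> corner" where
  "e1 Top = Alpha" | "e1 Bot = Gamma" | "e1 Lft = Gamma" | "e1 Rgt = Delta"
fun e2 :: "side \<Rightarrow> corner" where
  "e2 Top = Beta" | "e2 Bot = Delta" | "e2 Lft = Alpha" | "e2 Rgt = Beta"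

lemma side_par: "finite (cell_side k h a s) \<and>
   (odd (card {x \<in> cell_side k h a s. v \<in> x}) \<longleftrightarrow> v = cell_vertex k h a (e1 s) \<or> v = cell_vertex k h a (e2 s))"
proof (cases s)
  case Top then show ?thesis using hpath_par[of a v] by simp
next
  case Bot then show ?thesis using hpath_par[of "vplus a 0 (- h)" v] by (simp add: vplus_def)
next
  case Lft then show ?thesis using vpath_par[of "vplus a 0 (- h)" v] by (simp add: vplus_def)
next
  case Rgt then show ?thesis using vpath_par[of "vplus a h (- h)" v] by (simp add: vplus_def)
qed

lemma sum_nth_map: "(\<Sum>j<length (map f xs). g ((map f xs) ! j)) = sum_list (map (\<lambda>s. g (f s)) xs)"
proof -
  have "sum_list (map (\<lambda>s. g (f s)) xs) = (\<Sum>j = 0..<length (map (\<lambda>s. g (f s)) xs). map (\<lambda>s. g (f s)) xs ! j)"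
    by (rule sum_list_sum_nth)
  then show ?thesis by (simp add: atLeast0LessThan)
qed

lemma instr_par:
  assumes c: "c \<in> blocks k i" and vc: "v \<noteq> c"
  shows "(\<forall>j < length (instr_flips k i c l). finite (instr_flips k i c l ! j)) \<and>
    (odd (\<Sum>j<length (instr_flips k i c l). card {x \<in> instr_flips k i c l ! j. v \<in> x})
      \<longleftrightarrow> v \<in> instr_verts k i c l)"
proof -
  define a where "a = cell_alpha h c (instr_cell l)"
  have fl: "instr_flips k i c l = map (cell_side k h a) (instr_sides l)"
    by (simp add: instr_flips_def a_def)
  have iv: "instr_verts k i c l = cell_vertex k h a ` instr_corners l"
    by (simp add: instr_verts_def a_def)
  have fin: "\<forall>j < length (instr_flips k i c l). finite (instr_flips k i c l ! j)"
    unfolding fl using side_par by simp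
  have sp: "odd (card {x \<in> cell_side k h a s. v \<in> x}) \<longleftrightarrow> v = cell_vertex k h a (e1 s) \<or> v = cell_vertex k h a (e2 s)" for s
    using side_par by blast
  have inj: "cell_vertex k h a x = cell_vertex k h a y \<longleftrightarrow> x = y" for x y using cv_inj by blast
  have alpha3: "instr_step l = 3 \<Longrightarrow> cell_vertex k h a Alpha = c"
    by (cases l) (simp_all add: a_def vn_block[OF c])
  have "odd (\<Sum>j<length (instr_flips k i c l). card {x \<in> instr_flips k i c l ! j. v \<in> x})
     \<longleftrightarrow> odd (sum_list (map (\<lambda>s. card {x \<in> cell_side k h a s. v \<in> x}) (instr_sides l)))"
    unfolding fl using sum_nth_map[where f="cell_side k h a" and xs="instr_sides l" and g="\<lambda>A. card {x \<in> A. v \<in> x}"] by simp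
  also have "\<dots> \<longleftrightarrow> v \<in> cell_vertex k h a ` instr_corners l"
    using sp[of Top] sp[of Bot] sp[of Lft] sp[of Rgt] inj alpha3 vc
    by (cases l) (auto simp del: cell_vertex.simps cell_side.simps)
  finally show ?thesis using fin iv by simp
qed

end


context red begin

lemma decomp:
  assumes v: "v \<in> sublattice k i"
  shows "\<exists>c a b. c \<in> blocks k i \<and> a \<in> {0,1} \<and> b \<in> {0,1} \<and> v = Q c a b"
proof -
  obtain x y where xy: "v = (x,y)" by (cases v)
  have r: "0 \<le> x" "x < N" "0 \<le> y" "y < N" "h dvd x" "h dvd y"
    using v xy by (auto simp: sublattice_def torus_vertices_def)
  obtain s t where st: "x = h * s" "y = h * t" using r by (auto elim!: dvdE)
  define a where "a = s mod 2"
  define b where "b = t mod 2"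
  define c where "c = (x - a * h, (y + b * h) mod N)"
  have N0: "N > 0" by (simp add: Nk_def)
  have "x - a * h = 2 * h * (s div 2)" unfolding st a_def
    by (metis (no_types, lifting) minus_mod_eq_mult_div mult.assoc mult.commute right_diff_distrib')
  then have d1: "2 * h dvd x - a * h" by simp
  have "y + b * h = h * (t + t mod 2)" unfolding st b_def by (simp add: algebra_simps)
  moreover have "even (t + t mod 2)" by (metis dvd_mod_imp_dvd even_add even_mod_2_iff mod_mod_trivial)
  ultimately have "2 * h dvd y + b * h" by (metis evenE mult.assoc mult.left_commute dvd_triv_left)
  then have d2: "2 * h dvd (y + b * h) mod N" using h2_dvd_N by (simp add: dvd_mod)
  have ab: "a \<in> {0,1}" "b \<in> {0,1}" unfolding a_def b_def by (auto simp: mod2_eq_if) 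
  have s0: "0 \<le> s" using r(1) h_pos st by (simp add: zero_le_mult_iff)
  have as: "a \<le> s" "0 \<le> a" unfolding a_def using s0 by (simp_all add: zmod_le_nonneg_dividend)
  have "a * h \<le> s * h" using as h_pos by (intro mult_right_mono) auto
  then have "0 \<le> a * h" "a * h \<le> x" using as h_pos st by (simp_all add: mult.commute)
  then have cb: "c \<in> blocks k i" using d1 d2 r N0 by (simp add: blocks_iff c_def)
  have "Q c a b = v" using r xy by (simp add: Q_def c_def vn_def mod_simps)
  then show ?thesis using cb ab by blast
qed

lemma finite_blocks: "finite (blocks k i)"
proof -
  have "blocks k i \<subseteq> {0..<N} \<times> {0..<N}" by (auto simp: blocks_iff)
  then show ?thesis by (rule finite_subset) simp
qed

lemma sigma_char:
  fixes S :: "vert set"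
  assumes vt: "v \<in> torus_vertices k" and vb: "v \<notin> blocks k i"
  defines "Act \<equiv> {(c,l). c \<in> blocks k i \<and> active k i S c l}"
  shows "v \<in> sigma k (reduction_output k i S) \<longleftrightarrow> odd (card {p \<in> Act. v \<in> instr_verts k i (fst p) (snd p)})"
proof -
  define len where "len = (\<lambda>p. length (instr_flips k i (fst p) (snd p)))"
  define T where "T = {(c,l,j). c \<in> blocks k i \<and> active k i S c l \<and> j < length (instr_flips k i c l)}"
  define F where "F = (\<lambda>(c,l,j). instr_flips k i c l ! j)"
  define r where "r = (\<lambda>((c::vert,l::instr),j::nat). (c,l,j))"
  have finA: "finite Act"
    by (rule finite_subset[of _ "blocks k i \<times> UNIV"]) (auto simp: Act_def finite_blocks)
  have Teq: "T = r ` (SIGMA p:Act. {..<len p})"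
    by (auto simp: T_def r_def Act_def len_def image_iff)
  have injr: "inj_on r (SIGMA p:Act. {..<len p})" by (auto simp: inj_on_def r_def)
  have finT: "finite T" unfolding Teq using finA by auto
  have vc: "c \<in> blocks k i \<Longrightarrow> v \<noteq> c" for c using vb by auto
  have finF: "finite (F t)" if "t \<in> T" for t
    using that instr_par[OF _ vc] by (auto simp: T_def F_def)
  have out: "reduction_output k i S = {e. odd (card {t \<in> T. e \<in> F t})}"
  proof -
    have "{(c, l, j). c \<in> blocks k i \<and> active k i S c l \<and> j < length (instr_flips k i c l) \<and> e \<in> instr_flips k i c l ! j}
      = {t \<in> T. e \<in> F t}" for e by (auto simp: T_def F_def)
    then show ?thesis unfolding reduction_output_def by simp
  qed
  have "v \<in> sigma k (reduction_output k i S) \<longleftrightarrow> odd (\<Sum>t\<in>T. card {x \<in> F t. v \<in> x})"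
    unfolding sigma_def out using parity_sum_sets[OF finT finF, where v=v] vt by simp
  also have "(\<Sum>t\<in>T. card {x \<in> F t. v \<in> x}) = (\<Sum>q\<in>(SIGMA p:Act. {..<len p}). card {x \<in> F (r q). v \<in> x})"
    unfolding Teq by (rule sum.reindex[OF injr, unfolded comp_def])
  also have "\<dots> = (\<Sum>p\<in>Act. \<Sum>j<len p. card {x \<in> F (r (p,j)). v \<in> x})"
    using finA by (subst sum.Sigma) auto
  also have "\<dots> = (\<Sum>p\<in>Act. \<Sum>j<length (instr_flips k i (fst p) (snd p)). card {x \<in> instr_flips k i (fst p) (snd p) ! j. v \<in> x})"
    by (auto simp: F_def r_def len_def split: prod.splits intro!: sum.cong)
  finally have "v \<in> sigma k (reduction_output k i S) \<longleftrightarrow>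
     odd (card {p\<in>Act. odd (\<Sum>j<length (instr_flips k i (fst p) (snd p)). card {x \<in> instr_flips k i (fst p) (snd p) ! j. v \<in> x})})"
    using even_sum_iff[OF finA] by simp
  also have "{p\<in>Act. odd (\<Sum>j<length (instr_flips k i (fst p) (snd p)). card {x \<in> instr_flips k i (fst p) (snd p) ! j. v \<in> x})}
     = {p \<in> Act. v \<in> instr_verts k i (fst p) (snd p)}"
  proof (rule Collect_cong)
    fix p
    show "(p \<in> Act \<and> odd (\<Sum>j<length (instr_flips k i (fst p) (snd p)). card {x \<in> instr_flips k i (fst p) (snd p) ! j. v \<in> x}))
       = (p \<in> Act \<and> v \<in> instr_verts k i (fst p) (snd p))"
    proof (cases "p \<in> Act")
      case True
      then have "fst p \<in> blocks k i" by (auto simp: Act_def)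
      from conjunct2[OF instr_par[OF this vc[OF this]]] show ?thesis by simp
    qed simp
  qed
  finally show ?thesis .
qed

lemma act_cases:
  assumes "active k i S c l"
  shows "(instr_step l = 1 \<and> active1 k i S c l) \<or> (instr_step l = 2 \<and> active2 k i S c l) \<or> (instr_step l = 3 \<and> active3 k i S c l)"
  using assms by (auto simp: active_def active1_def active2_def active3_def)

lemma iv1_sub: "active1 k i S c l \<Longrightarrow> instr_verts k i c l \<subseteq> S"
proof -
  assume a: "active1 k i S c l"
  then have s: "instr_step l = 1" by (simp add: active1_def)
  then have cd: "instr_cell l = CellD" by (cases l) auto
  have "instr_verts k i c l \<subseteq> Dcell_verts k i c" unfolding iv_D[OF cd] Dcell_verts_def by auto
  then show ?thesis using a by (auto simp: active1_def split: if_splits)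
qed

lemma iv_sub: "active k i S c l \<Longrightarrow> instr_verts k i c l \<subseteq> S"
  using act_cases[of S c l] iv1_sub[of S c l] after1_sub[of S] after2_sub[of S]
  by (auto simp: active2_def active3_def)

lemma count:
  fixes S :: "vert set"
  assumes S: "S \<subseteq> sublattice k i" and vt: "v \<in> torus_vertices k" and vb: "v \<notin> blocks k i"
  defines "Act \<equiv> {(c,l). c \<in> blocks k i \<and> active k i S c l}"
  shows "v \<in> S \<longleftrightarrow> odd (card {p \<in> Act. v \<in> instr_verts k i (fst p) (snd p)})"
proof (cases "v \<in> S")
  case False
  have e: "{p \<in> Act. v \<in> instr_verts k i (fst p) (snd p)} = {}"
    using iv_sub[of S] False by (auto simp: Act_def)
  show ?thesis unfolding e using False by simp
next
  case True
  let ?X = "{p \<in> Act. v \<in> instr_verts k i (fst p) (snd p)}"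
  have same: "p = p'" if "p \<in> ?X" "p' \<in> ?X" for p p'
  proof -
    obtain c l c' l' where pp: "p = (c,l)" "p' = (c',l')" by (cases p, cases p')
    have c: "c \<in> blocks k i" "active k i S c l" "v \<in> instr_verts k i c l"
      and c': "c' \<in> blocks k i" "active k i S c' l'" "v \<in> instr_verts k i c' l'"
      using that pp by (auto simp: Act_def)
    have "instr_step l = instr_step l'"
    proof (rule ccontr)
      assume ne: "instr_step l \<noteq> instr_step l'"
      have r1: "v \<notin> after1 k i S" if "c0 \<in> blocks k i" "active1 k i S c0 l0" "v \<in> instr_verts k i c0 l0" for c0 l0
        using rem1[OF that] .
      have r2: "v \<notin> after2 k i S" if "c0 \<in> blocks k i" "active2 k i S c0 l0" "v \<in> instr_verts k i c0 l0" for c0 l0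
        using rem2[OF that] .
      have i2: "v \<in> after1 k i S" if "active2 k i S c0 l0" "v \<in> instr_verts k i c0 l0" for c0 l0
        using that by (auto simp: active2_def)
      have i3: "v \<in> after2 k i S" if "active3 k i S c0 l0" "v \<in> instr_verts k i c0 l0" for c0 l0
        using that by (auto simp: active3_def)
      show False
        using act_cases[OF c(2)] act_cases[OF c'(2)] ne r1[OF c(1) _ c(3)] r1[OF c'(1) _ c'(3)]
          r2[OF c(1) _ c(3)] r2[OF c'(1) _ c'(3)] i2[OF _ c(3)] i2[OF _ c'(3)] i3[OF _ c(3)] i3[OF _ c'(3)]
          after2_sub[of S]
        by auto
    qed
    then show ?thesis using uniq[OF c(1) c'(1) c(2) c'(2) _ c(3) c'(3)] pp by simp
  qed
  have ne: "?X \<noteq> {}"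
  proof (cases "\<exists>c l. c \<in> blocks k i \<and> active1 k i S c l \<and> v \<in> instr_verts k i c l")
    case True
    then show ?thesis by (auto simp: Act_def active_def)
  next
    case F1: False
    then have a1: "v \<in> after1 k i S" using \<open>v \<in> S\<close> unfolding after1_def by blast
    show ?thesis
    proof (cases "\<exists>c l. c \<in> blocks k i \<and> active2 k i S c l \<and> v \<in> instr_verts k i c l")
      case True
      then show ?thesis by (auto simp: Act_def active_def)
    next
      case False
      then have a2: "v \<in> after2 k i S" using a1 unfolding after2_def by blast
      obtain c a b where cab: "c \<in> blocks k i" "a \<in> {0,1}" "b \<in> {0,1}" "v = Q c a b"
        using decomp[of v] S True by blast
      have "(a,b) \<noteq> (0,0)" using cab vb Q00[OF cab(1)] by auto
      then consider "a = 1 \<and> b = 0" | "a = 0 \<and> b = 1" | "a = 1 \<and> b = 1" using cab(2,3) by auto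
      then have "\<exists>l. l \<in> {A_B, A_G, A_D} \<and> offs l = {(a,b)}"
      proof cases
        case 1 then show ?thesis by (intro exI[of _ A_B]) simp
      next
        case 2 then show ?thesis by (intro exI[of _ A_G]) simp
      next
        case 3 then show ?thesis by (intro exI[of _ A_D]) simp
      qed
      then obtain l where l: "l \<in> {A_B, A_G, A_D}" "offs l = {(a,b)}" by blast
      have iv: "instr_verts k i c l = {v}" using l(2) cab(4) by (simp add: instr_verts_Q)
      have "instr_step l = 3" using l(1) by auto
      then have "active k i S c l" using iv a2 by (simp add: active_def active3_def)
      then have "(c,l) \<in> ?X" using iv cab(1) by (simp add: Act_def)
      then show ?thesis by blast
    qed
  qed
  then obtain p0 where p0: "p0 \<in> ?X" by blast
  then have e: "?X = {p0}" using same by blast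
  show ?thesis unfolding e using True by simp
qed

end

theorem proposition1:
  fixes k i :: nat and S :: "vert set"
  assumes "1 \<le> i" and "i \<le> k" and "S \<subseteq> sublattice k i"
  shows "(\<forall>c \<in> blocks k i. \<forall>c' \<in> blocks k i. \<forall>l l' v.
            active k i S c l \<and> active k i S c' l' \<and> instr_step l = instr_step l' \<and>
            v \<in> instr_verts k i c l \<and> v \<in> instr_verts k i c' l'
            \<longrightarrow> c = c' \<and> l = l')
       \<and> (S - sigma k (reduction_output k i S)) \<union> (sigma k (reduction_output k i S) - S)
            \<subseteq> sublattice k (i - 1)"
proof -
  interpret red k i using assms(1,2) by unfold_locales
  have c1: "\<forall>c \<in> blocks k i. \<forall>c' \<in> blocks k i. \<forall>l l' v.
            active k i S c l \<and> active k i S c' l' \<and> instr_step l = instr_step l' \<and>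
            v \<in> instr_verts k i c l \<and> v \<in> instr_verts k i c' l'
            \<longrightarrow> c = c' \<and> l = l'"
    using uniq by blast
  have c2: "x \<in> sublattice k (i - 1)"
    if x: "x \<in> (S - sigma k (reduction_output k i S)) \<union> (sigma k (reduction_output k i S) - S)" for x
  proof (rule ccontr)
    assume nb: "x \<notin> sublattice k (i - 1)"
    then have xb: "x \<notin> blocks k i" by (simp add: blocks_def)
    have xt: "x \<in> torus_vertices k" using x assms(3) by (auto simp: sigma_def sublattice_def)
    have "x \<in> sigma k (reduction_output k i S) \<longleftrightarrow> x \<in> S"
      using sigma_char[OF xt xb, of S] count[OF assms(3) xt xb] by simp
    then show False using x by blast
  qed
  show ?thesis using c1 c2 by blast
qed

end
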